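(* Let $\beta,\lambda\ge0$ with $\lambda+\beta>0$, let $\gamma\ge 0$ and $x\in\mathbb{R}$ with $x^2\le\gamma^2$, and let $f(\lambda)=\frac{\lambda\beta}{\lambda+\beta}+x^2$. Then (1) $f(\lambda)\le\beta+\gamma^2$; (2) $f(\lambda)\le\lambda+\gamma^2$; (3) $f(\lambda)\le\max\Big\{\lambda,\ \frac{3\gamma^2+\sqrt{\gamma^4+4\gamma^2\beta}}{2}\Big\}$. *)

theory Defs
  imports Complex_Main
begin

end

theory Submission
  imports Defs
begin

theorem lemma6:
  fixes \<beta> lam \<gamma> x :: real
  assumes "\<beta> \<ge> 0" and "lam \<ge> 0" and "lam + \<beta> > 0"
    and "\<gamma> \<ge> 0" and "x^2 \<le> \<gamma>^2"
  defines "f \<equiv> lam * \<beta> / (lam + \<beta>) + x^2"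
  shows "f \<le> \<beta> + \<gamma>^2 \<and>
         f \<le> lam + \<gamma>^2 \<and>
         f \<le> max lam ((3 * \<gamma>^2 + sqrt (\<gamma>^4 + 4 * \<gamma>^2 * \<beta>)) / 2)"
proof -
  define g where "g = \<gamma>^2"
  have g0: "g \<ge> 0" using g_def by simp
  have xg: "x^2 \<le> g" using assms(5) g_def by simp
  have d: "lam * \<beta> / (lam + \<beta>) \<le> \<beta>"
  proof -
    have "lam * \<beta> \<le> \<beta> * (lam + \<beta>)" using assms(1,2) by (simp add: algebra_simps)
    then show ?thesis using assms(3) by (simp add: divide_le_eq mult.commute)
  qed
  have d2: "lam * \<beta> / (lam + \<beta>) \<le> lam"
  proof -
    have "\<beta> * lam \<le> lam * (lam + \<beta>)" using assms(1,2) by (simp add: algebra_simps)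
    then show ?thesis using assms(3) by (simp add: divide_le_eq mult.commute)
  qed
  define q where "q = sqrt (g^2 + 4*g*\<beta>)"
  have q0: "q \<ge> 0" using q_def g0 assms by simp
  have nn: "g^2 + 4*g*\<beta> \<ge> 0" using g0 assms(1) by simp
  have qq: "q^2 = g^2 + 4*g*\<beta>" unfolding q_def using nn by (rule real_sqrt_pow2)
  have qg: "q \<ge> g"
  proof -
    have "g^2 \<le> q^2" using qq g0 assms(1) by simp
    then show ?thesis using q0 g0 by (simp add: power2_le_iff_abs_le)
  qed
  have s: "(3 * \<gamma>^2 + sqrt (\<gamma>^4 + 4 * \<gamma>^2 * \<beta>)) / 2 = g + (g+q)/2"
  proof -
    have "\<gamma>^4 = g^2" unfolding g_def by simp
    then show ?thesis unfolding q_def g_def by simp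
  qed
  have c3: "f \<le> max lam (g + (g+q)/2)"
  proof (cases "lam \<ge> (g+q)/2")
    case True
    have "lam^2 - g*lam - g*\<beta> = (lam - (g+q)/2) * (lam - (g-q)/2)"
      using qq by (simp add: field_simps power2_eq_square)
    moreover have "(lam - (g+q)/2) * (lam - (g-q)/2) \<ge> 0"
      using True qg assms(2) by (intro mult_nonneg_nonneg) auto
    ultimately have h: "lam * \<beta> + g*(lam+\<beta>) \<le> lam*(lam+\<beta>)"
      by (simp add: algebra_simps power2_eq_square)
    have "lam * \<beta> / (lam + \<beta>) + g \<le> lam"
    proof -
      have "lam * \<beta> / (lam + \<beta>) + g = (lam*\<beta> + g*(lam+\<beta>)) / (lam+\<beta>)"
        using assms(3) by (simp add: field_simps)
      also have "\<dots> \<le> lam" using h assms(3) by (simp add: divide_le_eq)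
      finally show ?thesis .
    qed
    then show ?thesis using xg f_def by simp
  next
    case False
    have "f \<le> g + (g+q)/2" using False d2 xg unfolding f_def by linarith
    then show ?thesis by linarith
  qed
  have "f \<le> \<beta> + \<gamma>^2" using d xg f_def g_def by simp
  moreover have "f \<le> lam + \<gamma>^2" using d2 xg f_def g_def by simp
  moreover have "f \<le> max lam ((3 * \<gamma>^2 + sqrt (\<gamma>^4 + 4 * \<gamma>^2 * \<beta>)) / 2)"
    using c3 by (simp only: s)
  ultimately show ?thesis by blast
qed

end
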